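(* Let $d\in\mathbb{N}$ and let $\mathcal{P}$ be a partition of $\mathbb{R}^{d}$. Suppose there exist $D\in(0,\infty)$ and $\mu\in(0,\infty)$ such that every $X\in\mathcal{P}$ is Lebesgue measurable with $\mu<m(X)$ and $\operatorname{diam}(X)<D$. Then there exists $\vec{p}\in\mathbb{R}^{d}$ such that $|\mathcal{N}_{\overline{0}}(\vec{p})|\geq d+1$. Furthermore, $\mathcal{P}$ contains a $(d+1)$-clique.
   Context: $m$ is Lebesgue measure. On $\mathbb{R}^d$ use $d_{max}(\vec{x},\vec{y})=\max_i|x_i-y_i|$ and $\operatorname{diam}(X)=\sup\{d_{max}(\vec{x},\vec{y}):\vec{x},\vec{y}\in X\}$. $\mathcal{N}_{\overline{0}}(\vec{p})=\{X\in\mathcal{P}:\vec{p}\in\overline{X}\}$ ($\overline{X}$ the closure). Members $X,Y$ are adjacent if $\overline{X}\cap\overline{Y}\ne\emptyset$; an $n$-clique is a set of $n$ distinct pairwise adjacent members. *)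

theory Defs
  imports "HOL-Analysis.Analysis"
begin

definition d_max :: "real^'n \<Rightarrow> real^'n \<Rightarrow> real" where
  "d_max x y = Max (range (\<lambda>i. \<bar>x$i - y$i\<bar>))"

text \<open>Diameter as an extended real, so that the supremum is meaningful for unbounded sets.\<close>
definition diam_max :: "(real^'n) set \<Rightarrow> ereal" where
  "diam_max X = (SUP xy\<in>X \<times> X. ereal (d_max (fst xy) (snd xy)))"

definition is_partition :: "'a set set \<Rightarrow> bool" where
  "is_partition P \<longleftrightarrow> (\<forall>X\<in>P. X \<noteq> {}) \<and> \<Union>P = UNIV \<and>
     (\<forall>X\<in>P. \<forall>Y\<in>P. X \<noteq> Y \<longrightarrow> X \<inter> Y = {})"

definition nbhd0 :: "('a::topological_space) set set \<Rightarrow> 'a \<Rightarrow> 'a set set" where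
  "nbhd0 P p = {X\<in>P. p \<in> closure X}"

definition adjacent :: "('a::topological_space) set \<Rightarrow> 'a set \<Rightarrow> bool" where
  "adjacent X Y \<longleftrightarrow> closure X \<inter> closure Y \<noteq> {}"

definition is_clique :: "('a::topological_space) set set \<Rightarrow> nat \<Rightarrow> 'a set set \<Rightarrow> bool" where
  "is_clique P n C \<longleftrightarrow> C \<subseteq> P \<and> finite C \<and> card C = n \<and>
     (\<forall>X\<in>C. \<forall>Y\<in>C. X \<noteq> Y \<longrightarrow> adjacent X Y)"

end

theory Submission
  imports Defs "HOL-Analysis.Analysis"
begin

lemma infdist_lessE:
  assumes "A \<noteq> {}" "infdist x A < e"
  obtains a where "a \<in> A" "dist x a < e"
proof -
  have bdd: "bdd_below ((\<lambda>a. dist x a) ` A)"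
    by (rule bdd_belowI2[where m=0]) simp
  have "(INF a\<in>A. dist x a) < e" using assms infdist_notempty by metis
  then show ?thesis using that cINF_less_iff[OF assms(1) bdd] by blast
qed

lemma dmax_ge:
  fixes x y :: "real^'n"
  shows "\<bar>x$i - y$i\<bar> \<le> d_max x y"
  unfolding d_max_def by (rule Max_ge) auto

lemma norm_le_dmax:
  fixes x y :: "real^'n"
  shows "norm (x - y) \<le> real CARD('n) * d_max x y"
proof -
  have "norm (x-y) \<le> (\<Sum>i\<in>UNIV. \<bar>(x-y)$i\<bar>)" by (rule norm_le_l1_cart)
  also have "\<dots> \<le> (\<Sum>i\<in>(UNIV::'n set). d_max x y)" by (rule sum_mono) (simp add: dmax_ge)
  finally show ?thesis by simp
qed

lemma dmax_lt:
  assumes "diam_max X < ereal D" "x \<in> X" "y \<in> X"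
  shows "d_max x y < D"
proof -
  have "ereal (d_max x y) \<le> diam_max X" unfolding diam_max_def
    using assms(2,3) by (intro SUP_upper2[of "(x,y)"]) auto
  with assms(1) have "ereal (d_max x y) < ereal D" by (meson le_less_trans)
  then show ?thesis by simp
qed

lemma negligible_small_hull:
  fixes S :: "(real^'n) set"
  assumes "finite S" "card S \<le> CARD('n)"
  shows "negligible (convex hull S)"
proof -
  have "aff_dim S \<le> int (card S) - 1" using aff_dim_le_card[OF assms(1)] by simp
  also have "\<dots> < int DIM(real^'n)" using assms(2) by simp
  finally have "aff_dim (convex hull S) \<noteq> int DIM(real^'n)"
    by (simp add: aff_dim_convex_hull)
  then have "interior (convex hull S) = {}" by (rule low_dim_interior)
  then show ?thesis by (simp add: negligible_convex_interior)
qed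

theorem mainTheorem20:
  fixes P :: "(real^'n) set set" and D \<mu> :: real
  assumes "is_partition P"
    and "0 < D" and "0 < \<mu>"
    and "\<forall>X\<in>P. X \<in> sets lebesgue \<and> ennreal \<mu> < emeasure lebesgue X \<and> diam_max X < ereal D"
  shows "(\<exists>p. \<exists>S\<subseteq>nbhd0 P p. finite S \<and> card S \<ge> CARD('n) + 1)
         \<and> (\<exists>C. is_clique P (CARD('n) + 1) C)"
proof -
  define d where "d = CARD('n)"
  have ne: "\<And>X. X \<in> P \<Longrightarrow> X \<noteq> {}" and cov: "\<Union>P = UNIV"
    and disj: "\<And>X Y. X \<in> P \<Longrightarrow> Y \<in> P \<Longrightarrow> X \<noteq> Y \<Longrightarrow> X \<inter> Y = {}"
    using assms(1) unfolding is_partition_def by auto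
  have meas: "\<And>X. X \<in> P \<Longrightarrow> X \<in> sets lebesgue"
    and big: "\<And>X. X \<in> P \<Longrightarrow> ennreal \<mu> < emeasure lebesgue X"
    using assms(4) by auto
  have diam: "norm (x - y) \<le> real d * D" if "X \<in> P" "x \<in> X" "y \<in> X" for X x y
  proof -
    have "d_max x y < D" using dmax_lt assms(4) that by blast
    then have "real d * d_max x y \<le> real d * D" by (intro mult_left_mono) auto
    then show ?thesis using norm_le_dmax[of x y] unfolding d_def by linarith
  qed
  have first: "\<exists>p. \<exists>S\<subseteq>nbhd0 P p. finite S \<and> card S \<ge> d + 1"
  proof (rule ccontr)
    assume H: "\<not> ?thesis"
    have Hc: "card J \<le> d" if "J \<subseteq> P" "finite J" "\<forall>X\<in>J. p \<in> closure X" for p J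
    proof -
      have "J \<subseteq> nbhd0 P p" using that unfolding nbhd0_def by auto
      then have "\<not> card J \<ge> d + 1" using H that(2) by blast
      then show ?thesis by simp
    qed
    define r where "r = real d * D + 1"
    define R where "R = r + 1"
    define K where "K = cball (0::real^'n) R"
    define P' where "P' = {X\<in>P. X \<inter> cball 0 (R+1) \<noteq> {}}"
    have dD: "real d * D \<ge> 0" using assms(2) by simp
    have r_pos: "r > 0" unfolding r_def using dD by simp
    define B where "B = R + 1 + real d * D"
    have P'sub: "X \<subseteq> cball 0 B" if "X \<in> P'" for X
    proof
      fix y assume y: "y \<in> X"
      have "X \<inter> cball 0 (R+1) \<noteq> {}" using that unfolding P'_def by simp
      then obtain z where z0: "z \<in> X" "z \<in> cball 0 (R+1)" by blast
      then have z: "z \<in> X" "norm z \<le> R + 1" by auto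
      have "norm (y - z) \<le> real d * D" using diam[of X y z] that y z unfolding P'_def by auto
      then have "norm y \<le> B" unfolding B_def using z(2) norm_triangle_sub[of y z] by linarith
      then show "y \<in> cball 0 B" by simp
    qed
    have cbfin: "cball (0::real^'n) B \<in> lmeasurable" by (rule lmeasurable_cball)
    define M where "M = measure lebesgue (cball (0::real^'n) B)"
    have eM: "emeasure lebesgue (cball (0::real^'n) B) = ennreal M"
      unfolding M_def using cbfin by (intro emeasure_eq_ennreal_measure) (auto simp: fmeasurable_def)
    have cardbound: "real (card F) * \<mu> \<le> M" if "finite F" "F \<subseteq> P'" for F
    proof -
      have FP: "F \<subseteq> P" using that unfolding P'_def by auto
      have "ennreal (real (card F) * \<mu>) = (\<Sum>X\<in>F. ennreal \<mu>)"
        using assms(3) by (simp add: ennreal_mult ennreal_of_nat_eq_real_of_nat)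
      also have "\<dots> \<le> (\<Sum>X\<in>F. emeasure lebesgue X)"
        using FP big by (intro sum_mono less_imp_le) auto
      also have "\<dots> = emeasure lebesgue (\<Union>X\<in>F. X)"
      proof (rule sum_emeasure)
        show "disjoint_family_on (\<lambda>X. X) F" unfolding disjoint_family_on_def using FP disj by blast
      qed (use FP meas that(1) in auto)
      also have "\<dots> \<le> emeasure lebesgue (cball (0::real^'n) B)"
        using P'sub that(2) cbfin by (intro emeasure_mono) (auto simp: fmeasurable_def)
      finally have "ennreal (real (card F) * \<mu>) \<le> ennreal M" using eM by simp
      moreover have "M \<ge> 0" unfolding M_def by simp
      ultimately show ?thesis using ennreal_le_iff by blast
    qed
    have finP': "finite P'"
    proof (rule ccontr)
      assume "infinite P'"
      then obtain F where F: "finite F" "card F = Suc (nat \<lceil>M / \<mu>\<rceil>)" "F \<subseteq> P'"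
        using infinite_arbitrarily_large by blast
      have "real (card F) * \<mu> \<le> M" using cardbound F by blast
      then have "real (card F) \<le> M / \<mu>" using assms(3) by (simp add: field_simps)
      moreover have "real (card F) > M / \<mu>" using F(2) by linarith
      ultimately show False by simp
    qed
    define JJ where "JJ = {J. J \<subseteq> P' \<and> card J = Suc d}"
    have finJJ: "finite JJ" unfolding JJ_def by (rule finite_subset[of _ "Pow P'"]) (auto simp: finP')
    have K_props: "compact K" "K \<noteq> {}" unfolding K_def R_def using r_pos by auto
    have Jpos: "\<exists>e>0. \<forall>x\<in>K. e \<le> (\<Sum>X\<in>J. infdist x X)" if "J \<in> JJ" for J
    proof -
      have J: "J \<subseteq> P" "finite J" "card J = Suc d"
        using that finP' unfolding JJ_def P'_def by (auto dest: finite_subset)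
      have "continuous_on K (\<lambda>x. \<Sum>X\<in>J. infdist x X)" by (intro continuous_intros)
      then obtain x0 where x0: "x0 \<in> K" "\<forall>y\<in>K. (\<Sum>X\<in>J. infdist x0 X) \<le> (\<Sum>X\<in>J. infdist y X)"
        using continuous_attains_inf[OF K_props] by blast
      have "(\<Sum>X\<in>J. infdist x0 X) \<noteq> 0"
      proof
        assume "(\<Sum>X\<in>J. infdist x0 X) = 0"
        then have "\<forall>X\<in>J. infdist x0 X = 0" using J(2) by (simp add: sum_nonneg_eq_0_iff infdist_nonneg)
        then have "\<forall>X\<in>J. x0 \<in> closure X" using J(1) ne in_closure_iff_infdist_zero by blast
        then have "card J \<le> d" using Hc J by blast
        then show False using J by simp
      qed
      moreover have "(\<Sum>X\<in>J. infdist x0 X) \<ge> 0" by (simp add: sum_nonneg infdist_nonneg)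
      ultimately show ?thesis using x0 by (intro exI[of _ "\<Sum>X\<in>J. infdist x0 X"]) auto
    qed
    then obtain E where E: "\<And>J. J \<in> JJ \<Longrightarrow> E J > 0 \<and> (\<forall>x\<in>K. E J \<le> (\<Sum>X\<in>J. infdist x X))"
      by metis
    define m where "m = Min (insert 1 (E ` JJ))"
    have m_pos: "m > 0" unfolding m_def using finJJ E by (subst Min_gr_iff) auto
    have m_le: "m \<le> E J" if "J \<in> JJ" for J unfolding m_def using finJJ that by (intro Min_le) auto
    define \<delta> where "\<delta> = min 1 (m / (real d + 1))"
    have \<delta>_pos: "\<delta> > 0" unfolding \<delta>_def using m_pos by simp
    have \<delta>_le1: "\<delta> \<le> 1" unfolding \<delta>_def by simp
    have \<delta>_m: "(real d + 1) * \<delta> \<le> m"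
    proof -
      have "\<delta> \<le> m / (real d + 1)" unfolding \<delta>_def by simp
      then have "(real d + 1) * \<delta> \<le> (real d + 1) * (m / (real d + 1))" by (intro mult_left_mono) auto
      then show ?thesis by simp
    qed
    define Jx where "Jx x = {X\<in>P'. infdist x X < \<delta>}" for x
    have Jx_card: "card (Jx x) \<le> d" if "x \<in> K" for x
    proof (rule ccontr)
      assume "\<not> card (Jx x) \<le> d"
      then have "Suc d \<le> card (Jx x)" by simp
      then obtain J where J: "J \<subseteq> Jx x" "card J = Suc d" "finite J"
        using obtain_subset_with_card_n by metis
      have JJ: "J \<in> JJ" using J unfolding JJ_def Jx_def by auto
      have "(\<Sum>X\<in>J. infdist x X) < (\<Sum>X\<in>J. \<delta>)"
        using J unfolding Jx_def by (intro sum_strict_mono) auto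
      also have "\<dots> = (real d + 1) * \<delta>" using J by simp
      also have "\<dots> \<le> E J" using \<delta>_m m_le[OF JJ] by simp
      moreover have "E J \<le> (\<Sum>X\<in>J. infdist x X)" using E[OF JJ] that by blast
      ultimately show False by simp
    qed
    have finJx: "finite (Jx x)" for x using finP' unfolding Jx_def by simp
    define c where "c X = (SOME y. y \<in> X)" for X :: "(real^'n) set"
    have cX: "c X \<in> X" if "X \<in> P" for X unfolding c_def using ne[OF that] by (simp add: some_in_eq)
    define w where "w X x = max 0 (\<delta> - infdist x X)" for X :: "(real^'n) set" and x :: "real^'n"
    define W where "W x = (\<Sum>X\<in>P'. w X x)" for x
    define g where "g x = (\<Sum>X\<in>P'. (w X x / W x) *\<^sub>R c X)" for x
    have w_nn: "w X x \<ge> 0" for X x unfolding w_def by simp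
    have W_pos: "W x > 0" if "x \<in> K" for x
    proof -
      obtain X0 where X0: "X0 \<in> P" "x \<in> X0" using cov by blast
      have "norm x \<le> R + 1" using that unfolding K_def by simp
      then have X0P': "X0 \<in> P'" using X0 unfolding P'_def by auto
      have "w X0 x = \<delta>" unfolding w_def using X0 \<delta>_pos by simp
      moreover have "w X0 x \<le> W x" unfolding W_def using finP' X0P' w_nn by (intro member_le_sum) auto
      ultimately show ?thesis using \<delta>_pos by simp
    qed
    have cw: "continuous_on K (w X)" for X unfolding w_def by (intro continuous_intros)
    have cW: "continuous_on K W" unfolding W_def by (intro continuous_on_sum cw)
    have cont: "continuous_on K g" unfolding g_def
    proof (intro continuous_on_sum continuous_on_scaleR continuous_on_const continuous_on_divide cw cW)
      show "\<forall>x\<in>K. W x \<noteq> 0" using W_pos by (simp add: less_imp_neq[symmetric] )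
    qed
    have wsum: "(\<Sum>X\<in>P'. w X x / W x) = 1" if "x \<in> K" for x
      using W_pos[OF that] unfolding sum_divide_distrib[symmetric] W_def by simp
    have wzero: "w X x = 0" if "X \<notin> Jx x" "X \<in> P'" for X x
      using that unfolding w_def Jx_def by auto
    have close: "norm (g x - x) \<le> r" if "x \<in> K" for x
    proof -
      have "g x - x = (\<Sum>X\<in>P'. (w X x / W x) *\<^sub>R c X) - (\<Sum>X\<in>P'. w X x / W x) *\<^sub>R x"
        unfolding g_def wsum[OF that] by simp
      also have "\<dots> = (\<Sum>X\<in>P'. (w X x / W x) *\<^sub>R (c X - x))"
        by (simp add: scaleR_sum_left sum_subtractf scaleR_diff_right)
      finally have eqn: "g x - x = (\<Sum>X\<in>P'. (w X x / W x) *\<^sub>R (c X - x))" .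
      have "norm (g x - x) \<le> (\<Sum>X\<in>P'. norm ((w X x / W x) *\<^sub>R (c X - x)))"
        unfolding eqn by (rule norm_sum)
      also have "\<dots> \<le> (\<Sum>X\<in>P'. (w X x / W x) * r)"
      proof (rule sum_mono)
        fix X assume XP': "X \<in> P'"
        have ge: "w X x / W x \<ge> 0" using w_nn W_pos[OF that] by simp
        show "norm ((w X x / W x) *\<^sub>R (c X - x)) \<le> (w X x / W x) * r"
        proof (cases "X \<in> Jx x")
          case True
          then have XP: "X \<in> P" and lt: "infdist x X < 1" using \<delta>_le1 unfolding Jx_def P'_def by auto
          obtain y where y: "y \<in> X" "dist x y < 1" using infdist_lessE[OF ne[OF XP] lt] by blast
          have "norm (c X - y) \<le> real d * D" using diam[OF XP cX[OF XP] y(1)] .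
          moreover have "norm (y - x) < 1" using y(2) by (simp add: dist_norm norm_minus_commute)
          ultimately have "norm (c X - x) \<le> r" unfolding r_def
            using norm_triangle_ineq[of "c X - y" "y - x"] by simp
          then have "(w X x / W x) * norm (c X - x) \<le> (w X x / W x) * r" using ge by (rule mult_left_mono)
          then show ?thesis using ge w_nn[of X x] W_pos[OF that] by simp
        next
          case False
          then show ?thesis using wzero[OF False XP'] by simp
        qed
      qed
      also have "\<dots> = (\<Sum>X\<in>P'. w X x / W x) * r" by (rule sum_distrib_right[symmetric])
      also have "\<dots> = r" using wsum[OF that] by simp
      finally show ?thesis .
    qed
    define U where "U = (\<Union>J\<in>{J. J \<subseteq> P' \<and> card J \<le> d}. convex hull (c ` J))"
    have img: "g x \<in> U" if "x \<in> K" for x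
    proof -
      have eq1: "g x = (\<Sum>X\<in>Jx x. (w X x / W x) *\<^sub>R c X)"
        unfolding g_def using finP' wzero by (intro sum.mono_neutral_right) (auto simp: Jx_def)
      have eq2: "(\<Sum>X\<in>Jx x. w X x / W x) = 1"
        unfolding wsum[OF that, symmetric] using finP' wzero by (intro sum.mono_neutral_left) (auto simp: Jx_def)
      have "g x \<in> convex hull (c ` Jx x)"
        unfolding eq1 using finJx eq2 w_nn W_pos[OF that]
        by (intro convex_sum) (auto intro: hull_inc)
      moreover have "Jx x \<subseteq> P'" "card (Jx x) \<le> d" using Jx_card[OF that] unfolding Jx_def by auto
      ultimately show ?thesis unfolding U_def by blast
    qed
    have negU: "negligible U"
      unfolding U_def
    proof (rule negligible_Union)
      show "finite ((\<lambda>J. convex hull (c ` J)) ` {J. J \<subseteq> P' \<and> card J \<le> d})"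
      proof (rule finite_imageI)
        show "finite {J. J \<subseteq> P' \<and> card J \<le> d}"
          by (rule finite_subset[of _ "Pow P'"]) (auto simp: finP')
      qed
    next
      fix T assume "T \<in> (\<lambda>J. convex hull (c ` J)) ` {J. J \<subseteq> P' \<and> card J \<le> d}"
      then obtain J where J: "J \<subseteq> P'" "card J \<le> d" "T = convex hull (c ` J)" by blast
      have fJ: "finite J" using J(1) finP' by (rule finite_subset)
      have "card (c ` J) \<le> CARD('n)" using card_image_le[OF fJ, of c] J(2) unfolding d_def by simp
      then show "negligible T" using J(3) fJ by (simp add: negligible_small_hull)
    qed
    have "ball (0::real^'n) 1 \<subseteq> g ` K"
    proof
      fix z :: "real^'n" assume z: "z \<in> ball 0 1"
      have "\<exists>y\<in>cball 0 R. g y = z"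
      proof (rule brouwer_surjective_cball[where S="ball 0 1"])
        show "continuous_on (cball 0 R) g" using cont unfolding K_def .
        show "R > 0" unfolding R_def using r_pos by simp
        show "z \<in> ball 0 1" by (rule z)
        fix x y :: "real^'n" assume x: "x \<in> ball 0 1" and y: "y \<in> cball 0 R"
        have "norm (y - g y) \<le> r" using close[of y] y unfolding K_def by (simp add: norm_minus_commute)
        then have "norm (x + (y - g y)) \<le> R" unfolding R_def
          using x norm_triangle_ineq[of x "y - g y"] by simp
        then show "x + (y - g y) \<in> cball 0 R" by simp
      qed
      then show "z \<in> g ` K" unfolding K_def by force
    qed
    also have "\<dots> \<subseteq> U" using img by blast
    finally have "negligible (ball (0::real^'n) 1)" using negU negligible_subset by blast
    then show False using open_not_negligible[of "ball (0::real^'n) 1"] by simp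
  qed
  then obtain p S where S: "S \<subseteq> nbhd0 P p" "finite S" "card S \<ge> d + 1" by blast
  then obtain C where C: "C \<subseteq> S" "card C = d + 1" "finite C"
    using obtain_subset_with_card_n by metis
  have "is_clique P (CARD('n) + 1) C"
    using C S unfolding is_clique_def adjacent_def nbhd0_def d_def by blast
  then show ?thesis using S unfolding d_def by blast
qed

end
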